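(* Let $\alpha,\beta,\gamma>-1$ and $n\in\{0,1,2,\dots\}$. Then: (1) $P_{0,n}^{(\alpha,\beta,\gamma)}(x,y)\in\mathcal V_n^2(W_{\alpha,\beta,\gamma})$ and its restriction to the line $x=0$ is $J_n^{(\gamma,\beta)}(y)$; (2) $P_{0,n}^{(\beta,\alpha,\gamma)}(y,x)\in\mathcal V_n^2(W_{\alpha,\beta,\gamma})$ and its restriction to the line $y=0$ is $J_n^{(\gamma,\alpha)}(x)$; (3) $P_{0,n}^{(\gamma,\beta,\alpha)}(1-x-y,y)\in\mathcal V_n^2(W_{\alpha,\beta,\gamma})$ and its restriction to the line $x+y=1$ is $J_n^{(\alpha,\beta)}(y)$.
   Context: $T^2=\{(x,y):x\ge0,y\ge0,1-x-y\ge0\}$ and $W_{a,b,c}(x,y)=x^a y^b(1-x-y)^c$. For $a,b,c>-1$, $\mathcal V_n^2(W_{a,b,c})$ is the space of polynomials $P$ of total degree $n$ in $(x,y)$ with $\int_{T^2}P\,Q\,W_{a,b,c}\,dx\,dy=0$ for all polynomials $Q$ of degree at most $n-1$. For $0\le k\le n$, $P_{k,n}^{(a,b,c)}(x,y)=[W_{a,b,c}(x,y)]^{-1}\frac{\partial^n}{\partial x^k\partial y^{n-k}}\big[x^{a+k}y^{b+n-k}(1-x-y)^{c+n}\big]$. The Jacobi polynomials on $[0,1]$ are $J_n^{(a,b)}(t)=(1-t)^{-a}t^{-b}\frac{d^n}{dt^n}\big[(1-t)^{n+a}t^{n+b}\big]$. *)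

theory Defs
  imports "HOL-Analysis.Analysis"
begin

definition tri :: "(real \<times> real) set" where
  "tri = {(x, y). x \<ge> 0 \<and> y \<ge> 0 \<and> 1 - x - y \<ge> 0}"

definition tri_int :: "(real \<times> real) set" where
  "tri_int = {(x, y). x > 0 \<and> y > 0 \<and> 1 - x - y > 0}"

definition W :: "real \<Rightarrow> real \<Rightarrow> real \<Rightarrow> real \<times> real \<Rightarrow> real" where
  "W a b c = (\<lambda>(x, y). x powr a * y powr b * (1 - x - y) powr c)"

definition is_poly2 :: "nat \<Rightarrow> (real \<times> real \<Rightarrow> real) \<Rightarrow> bool" where
  "is_poly2 n p \<longleftrightarrow> (\<exists>c :: nat \<Rightarrow> nat \<Rightarrow> real.
      \<forall>x y. p (x, y) = (\<Sum>i\<le>n. \<Sum>j\<le>n - i. c i j * x ^ i * y ^ j))"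

definition in_V2 :: "real \<Rightarrow> real \<Rightarrow> real \<Rightarrow> nat \<Rightarrow> (real \<times> real \<Rightarrow> real) \<Rightarrow> bool" where
  "in_V2 a b c n p \<longleftrightarrow> is_poly2 n p \<and>
     (\<forall>m Q. m < n \<longrightarrow> is_poly2 m Q \<longrightarrow>
        ((\<lambda>z. p z * Q z * W a b c z) has_integral 0) tri)"

definition pdx :: "(real \<times> real \<Rightarrow> real) \<Rightarrow> real \<times> real \<Rightarrow> real" where
  "pdx f = (\<lambda>(x, y). deriv (\<lambda>t. f (t, y)) x)"

definition pdy :: "(real \<times> real \<Rightarrow> real) \<Rightarrow> real \<times> real \<Rightarrow> real" where
  "pdy f = (\<lambda>(x, y). deriv (\<lambda>t. f (x, t)) y)"

definition Ptri :: "real \<Rightarrow> real \<Rightarrow> real \<Rightarrow> nat \<Rightarrow> nat \<Rightarrow> real \<times> real \<Rightarrow> real" where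
  "Ptri a b c k n = (\<lambda>z. ((pdx ^^ k) ((pdy ^^ (n - k))
      (\<lambda>(x, y). x powr (a + real k) * y powr (b + real n - real k)
                 * (1 - x - y) powr (c + real n)))) z / W a b c z)"

definition Jac :: "nat \<Rightarrow> real \<Rightarrow> real \<Rightarrow> real \<Rightarrow> real" where
  "Jac n a b t = (1 - t) powr (- a) * t powr (- b) *
     (deriv ^^ n) (\<lambda>s. (1 - s) powr (real n + a) * s powr (real n + b)) t"

end

theory Submission
  imports Defs "HOL-Computational_Algebra.Polynomial"
begin


lemma poly2_cong: assumes "is_poly2 n p" "\<And>x y. p (x,y) = q (x,y)" shows "is_poly2 n q"
proof -
  have "p = q" using assms(2) by (auto simp: fun_eq_iff)
  then show ?thesis using assms(1) by simp
qed

lemma poly2_zero: "is_poly2 n (\<lambda>_. 0)"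
  unfolding is_poly2_def by (rule exI[of _ "\<lambda>i j. 0"]) simp

lemma poly2_const: "is_poly2 0 (\<lambda>_. r)"
  unfolding is_poly2_def by (rule exI[of _ "\<lambda>i j. r"]) simp

lemma poly2_add: "is_poly2 n p \<Longrightarrow> is_poly2 n q \<Longrightarrow> is_poly2 n (\<lambda>z. p z + q z)"
  unfolding is_poly2_def
proof (elim exE)
  fix c d assume c: "\<forall>x y. p (x, y) = (\<Sum>i\<le>n. \<Sum>j\<le>n - i. c i j * x ^ i * y ^ j)"
    and d: "\<forall>x y. q (x, y) = (\<Sum>i\<le>n. \<Sum>j\<le>n - i. d i j * x ^ i * y ^ j)"
  show "\<exists>e. \<forall>x y. p (x, y) + q (x, y) = (\<Sum>i\<le>n. \<Sum>j\<le>n - i. e i j * x ^ i * y ^ j)"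
    by (rule exI[of _ "\<lambda>i j. c i j + d i j"]) (simp add: c d sum.distrib algebra_simps)
qed

lemma poly2_scale: "is_poly2 n p \<Longrightarrow> is_poly2 n (\<lambda>z. r * p z)"
  unfolding is_poly2_def
proof (elim exE)
  fix c assume c: "\<forall>x y. p (x, y) = (\<Sum>i\<le>n. \<Sum>j\<le>n - i. c i j * x ^ i * y ^ j)"
  show "\<exists>e. \<forall>x y. r * p (x, y) = (\<Sum>i\<le>n. \<Sum>j\<le>n - i. e i j * x ^ i * y ^ j)"
    by (rule exI[of _ "\<lambda>i j. r * c i j"]) (simp add: c sum_distrib_left algebra_simps)
qed

lemma poly2_sum: "finite S \<Longrightarrow> (\<And>k. k \<in> S \<Longrightarrow> is_poly2 n (f k)) \<Longrightarrow> is_poly2 n (\<lambda>z. \<Sum>k\<in>S. f k z)"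
proof (induction S rule: finite_induct)
  case empty then show ?case by (simp add: poly2_zero)
next
  case (insert a S)
  then show ?case by (simp add: poly2_add)
qed

lemma tri_sum: "(\<Sum>i\<le>(n::nat). \<Sum>j\<le>n - i. f i j) = (\<Sum>(i,j)\<in>Sigma {..n} (\<lambda>i. {..n-i}). f i j)"
  by (rule sum.Sigma) auto

lemma poly2_mono: assumes "is_poly2 m p" "m \<le> n" shows "is_poly2 n p"
proof -
  from assms(1) obtain c where c: "\<forall>x y. p (x, y) = (\<Sum>i\<le>m. \<Sum>j\<le>m - i. c i j * x ^ i * y ^ j)"
    unfolding is_poly2_def by blast
  define d where "d = (\<lambda>i j. if i + j \<le> m then c i j else 0)"
  have sub: "Sigma {..m} (\<lambda>i. {..m-i}) \<subseteq> Sigma {..n} (\<lambda>i. {..n-i})" using assms(2) by auto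
  have "p (x,y) = (\<Sum>i\<le>n. \<Sum>j\<le>n - i. d i j * x ^ i * y ^ j)" for x y
  proof -
    have "p (x,y) = (\<Sum>i\<le>m. \<Sum>j\<le>m - i. c i j * x ^ i * y ^ j)" using c by blast
    also have "\<dots> = (\<Sum>(i,j)\<in>Sigma {..m} (\<lambda>i. {..m-i}). c i j * x ^ i * y ^ j)" by (rule tri_sum)
    also have "\<dots> = (\<Sum>(i,j)\<in>Sigma {..m} (\<lambda>i. {..m-i}). d i j * x ^ i * y ^ j)"
      by (rule sum.cong) (auto simp: d_def)
    also have "\<dots> = (\<Sum>(i,j)\<in>Sigma {..n} (\<lambda>i. {..n-i}). d i j * x ^ i * y ^ j)"
      by (rule sum.mono_neutral_left) (use sub in \<open>auto simp: d_def split: if_splits\<close>)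
    finally show ?thesis unfolding tri_sum .
  qed
  then show ?thesis unfolding is_poly2_def by blast
qed

lemma poly2_xmul: assumes "is_poly2 n p" shows "is_poly2 (Suc n) (\<lambda>(x,y). x * p (x,y))"
proof -
  from assms obtain c where c: "\<forall>x y. p (x, y) = (\<Sum>i\<le>n. \<Sum>j\<le>n - i. c i j * x ^ i * y ^ j)"
    unfolding is_poly2_def by blast
  define d where "d = (\<lambda>i j. if i = 0 then 0 else c (i - 1) j)"
  have "x * p (x,y) = (\<Sum>i\<le>Suc n. \<Sum>j\<le>Suc n - i. d i j * x ^ i * y ^ j)" for x y
    unfolding sum.atMost_Suc_shift by (simp add: c d_def sum_distrib_left algebra_simps)
  then show ?thesis unfolding is_poly2_def by auto
qed

lemma poly2_ymul: assumes "is_poly2 n p" shows "is_poly2 (Suc n) (\<lambda>(x,y). y * p (x,y))"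
proof -
  from assms obtain c where c: "\<forall>x y. p (x, y) = (\<Sum>i\<le>n. \<Sum>j\<le>n - i. c i j * x ^ i * y ^ j)"
    unfolding is_poly2_def by blast
  define d where "d = (\<lambda>i j. if j = 0 then 0 else c i (j - 1))"
  have "y * p (x,y) = (\<Sum>i\<le>Suc n. \<Sum>j\<le>Suc n - i. d i j * x ^ i * y ^ j)" for x y
  proof -
    have "(\<Sum>i\<le>Suc n. \<Sum>j\<le>Suc n - i. d i j * x ^ i * y ^ j) = (\<Sum>i\<le>n. \<Sum>j\<le>Suc (n - i). d i j * x ^ i * y ^ j)"
      by (simp add: d_def Suc_diff_le)
    also have "\<dots> = (\<Sum>i\<le>n. \<Sum>j\<le>n - i. c i j * x ^ i * y ^ Suc j)"
      by (rule sum.cong[OF refl], subst sum.atMost_Suc_shift) (simp add: d_def del: sum.atMost_Suc)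
    also have "\<dots> = y * p (x,y)" by (simp add: c sum_distrib_left algebra_simps)
    finally show ?thesis by simp
  qed
  then show ?thesis unfolding is_poly2_def by auto
qed

lemma poly2_xpow: "is_poly2 d q \<Longrightarrow> is_poly2 (a + d) (\<lambda>(x,y). x ^ a * q (x,y))"
proof (induction a)
  case 0 then show ?case by simp
next
  case (Suc a)
  have "is_poly2 (Suc (a + d)) (\<lambda>(x,y). x ^ Suc a * q (x,y))"
    by (rule poly2_cong[OF poly2_xmul[OF Suc.IH[OF Suc.prems]]]) simp
  then show ?case by simp
qed

lemma poly2_ypow: "is_poly2 d q \<Longrightarrow> is_poly2 (a + d) (\<lambda>(x,y). y ^ a * q (x,y))"
proof (induction a)
  case 0 then show ?case by simp
next
  case (Suc a)
  have "is_poly2 (Suc (a + d)) (\<lambda>(x,y). y ^ Suc a * q (x,y))"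
    by (rule poly2_cong[OF poly2_ymul[OF Suc.IH[OF Suc.prems]]]) simp
  then show ?case by simp
qed

lemma poly2_lin_pow: "is_poly2 k (\<lambda>(x,y). (1 - x - y) ^ k)"
proof (induction k)
  case 0 show ?case using poly2_const[of 1] by (rule poly2_cong) simp
next
  case (Suc k)
  let ?q = "\<lambda>(x,y). (1 - x - y :: real) ^ k"
  have a: "is_poly2 (Suc k) ?q" using Suc by (rule poly2_mono) simp
  have b: "is_poly2 (Suc k) (\<lambda>z. (-1) * (case z of (x,y) \<Rightarrow> x * ?q (x,y)))"
    by (rule poly2_scale[OF poly2_xmul[OF Suc]])
  have c: "is_poly2 (Suc k) (\<lambda>z. (-1) * (case z of (x,y) \<Rightarrow> y * ?q (x,y)))"
    by (rule poly2_scale[OF poly2_ymul[OF Suc]])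
  from poly2_add[OF poly2_add[OF a b] c] show ?case
    by (rule poly2_cong) (simp add: algebra_simps)
qed



fun L :: "real \<Rightarrow> real \<Rightarrow> nat \<Rightarrow> nat \<Rightarrow> real" where
  "L A C 0 k = (if k = 0 then 1 else 0)"
| "L A C (Suc i) k = (if k = 0 then 0 else L A C i (k - 1) * (A - real (k - 1)))
      - L A C i k * (C - real i + real k)"

definition E :: "real \<Rightarrow> real \<Rightarrow> real \<Rightarrow> nat \<Rightarrow> real \<Rightarrow> real" where
  "E A C s i y = (\<Sum>k\<le>i. L A C i k * (y powr (A - real k) * (s - y) powr (C - real i + real k)))"

lemma L_zero: "i < k \<Longrightarrow> L A C i k = 0"
  by (induction i arbitrary: k) auto

lemma term_deriv:
  assumes "0 < y" "y < s"
  shows "((\<lambda>y. y powr p * (s - y) powr q) has_real_derivative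
     (p * y powr (p - 1) * (s - y) powr q - q * y powr p * (s - y) powr (q - 1))) (at y)"
proof -
  have 1: "((\<lambda>y. y powr p) has_real_derivative p * y powr (p - 1)) (at y)"
    by (rule has_real_derivative_powr) (use assms in simp)
  have 2: "((\<lambda>y. (s - y) powr q) has_real_derivative q * (s - y) powr (q - 1) * (0 - 1)) (at y)"
    using DERIV_chain2[OF has_real_derivative_powr[of "s - y" q] DERIV_diff[OF DERIV_const DERIV_ident]]
      assms by simp
  show ?thesis by (rule DERIV_cong[OF DERIV_mult[OF 1 2]]) (simp add: algebra_simps)
qed

lemma E_deriv:
  assumes "0 < y" "y < s"
  shows "(E A C s i has_real_derivative E A C s (Suc i) y) (at y)"
proof -
  have d: "(E A C s i has_real_derivative (\<Sum>k\<le>i. L A C i k *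
      ((A - real k) * y powr (A - real k - 1) * (s - y) powr (C - real i + real k)
       - (C - real i + real k) * y powr (A - real k) * (s - y) powr (C - real i + real k - 1)))) (at y)"
    unfolding E_def[abs_def]
    by (intro DERIV_sum DERIV_cmult term_deriv assms)
  have "(\<Sum>k\<le>i. L A C i k *
      ((A - real k) * y powr (A - real k - 1) * (s - y) powr (C - real i + real k)
       - (C - real i + real k) * y powr (A - real k) * (s - y) powr (C - real i + real k - 1)))
     = (\<Sum>k\<le>i. L A C i k * (A - real k) * (y powr (A - real (Suc k)) * (s - y) powr (C - real (Suc i) + real (Suc k))))
       - (\<Sum>k\<le>i. L A C i k * (C - real i + real k) * (y powr (A - real k) * (s - y) powr (C - real (Suc i) + real k)))"
    unfolding sum_subtractf[symmetric]
  proof (rule sum.cong[OF refl])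
    fix k
    have e1: "A - real k - 1 = A - real (Suc k)" "C - real i + real k = C - real (Suc i) + real (Suc k)"
      "C - real i + real k - 1 = C - real (Suc i) + real k" by simp_all
    show "L A C i k *
      ((A - real k) * y powr (A - real k - 1) * (s - y) powr (C - real i + real k)
       - (C - real i + real k) * y powr (A - real k) * (s - y) powr (C - real i + real k - 1))
      = L A C i k * (A - real k) * (y powr (A - real (Suc k)) * (s - y) powr (C - real (Suc i) + real (Suc k)))
       - L A C i k * (C - real i + real k) * (y powr (A - real k) * (s - y) powr (C - real (Suc i) + real k))"
      unfolding e1 by (simp add: algebra_simps)
  qed
  also have "(\<Sum>k\<le>i. L A C i k * (A - real k) * (y powr (A - real (Suc k)) * (s - y) powr (C - real (Suc i) + real (Suc k))))
     = (\<Sum>k\<le>Suc i. (if k = 0 then 0 else L A C i (k - 1) * (A - real (k - 1))) * (y powr (A - real k) * (s - y) powr (C - real (Suc i) + real k)))"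
    by (subst sum.atMost_Suc_shift) (simp del: sum.atMost_Suc)
  also have "(\<Sum>k\<le>i. L A C i k * (C - real i + real k) * (y powr (A - real k) * (s - y) powr (C - real (Suc i) + real k)))
     = (\<Sum>k\<le>Suc i. L A C i k * (C - real i + real k) * (y powr (A - real k) * (s - y) powr (C - real (Suc i) + real k)))"
    by (simp add: L_zero)
  also have "(\<Sum>k\<le>Suc i. (if k = 0 then 0 else L A C i (k - 1) * (A - real (k - 1))) * (y powr (A - real k) * (s - y) powr (C - real (Suc i) + real k)))
      - (\<Sum>k\<le>Suc i. L A C i k * (C - real i + real k) * (y powr (A - real k) * (s - y) powr (C - real (Suc i) + real k)))
      = E A C s (Suc i) y"
    unfolding E_def by (simp only: sum_subtractf[symmetric] L.simps(2) left_diff_distrib)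
  finally show ?thesis using d by simp
qed

lemma E_factor:
  assumes "0 < y" "y < s"
  shows "E A C s i y = y powr (A - real i) * (s - y) powr (C - real i) *
     (\<Sum>k\<le>i. L A C i k * y ^ (i - k) * (s - y) ^ k)"
  unfolding E_def sum_distrib_left
proof (rule sum.cong[OF refl])
  fix k assume k: "k \<in> {..i}"
  have "y powr (A - real k) = y powr (A - real i) * y ^ (i - k)"
    using k assms by (simp add: powr_realpow[symmetric] powr_add[symmetric] of_nat_diff)
  moreover have "(s - y) powr (C - real i + real k) = (s - y) powr (C - real i) * (s - y) ^ k"
    using assms by (simp add: powr_realpow[symmetric] powr_add[symmetric])
  ultimately show "L A C i k * (y powr (A - real k) * (s - y) powr (C - real i + real k)) =
    y powr (A - real i) * (s - y) powr (C - real i) * (L A C i k * y ^ (i - k) * (s - y) ^ k)"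
    by (simp add: algebra_simps)
qed

lemma E_at0: "E A C s i 0 = 0" by (simp add: E_def)
lemma E_ats: "E A C s i s = 0" by (simp add: E_def)

lemma E_cont:
  assumes "A - real i > 0" "C - real i > 0"
  shows "continuous_on {0..s} (E A C s i)"
  unfolding E_def[abs_def]
  by (intro continuous_on_sum continuous_on_mult continuous_on_const continuous_on_powr'
      continuous_on_id continuous_on_diff) (use assms in auto)

lemma deriv_iter:
  assumes "\<And>t. t \<in> {lo<..<hi} \<Longrightarrow> g t = h 0 t"
    and "\<And>i t. t \<in> {lo<..<hi} \<Longrightarrow> (h i has_real_derivative h (Suc i) t) (at t)"
  shows "t \<in> {lo<..<hi} \<Longrightarrow> (deriv ^^ i) g t = h i t"
proof (induction i arbitrary: t)
  case 0 then show ?case using assms(1) by simp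
next
  case (Suc i)
  have "((deriv ^^ i) g has_real_derivative h (Suc i) t) (at t)"
    by (rule has_field_derivative_transform_within_open[OF assms(2)[OF Suc.prems] open_greaterThanLessThan Suc.prems])
       (simp add: Suc.IH)
  then show ?case by (simp add: DERIV_imp_deriv)
qed

lemma pdy_apply: "pdy g (x, t) = deriv (\<lambda>t. g (x, t)) t" by (simp add: pdy_def)

lemma pdy_iter:
  assumes "\<And>t. t \<in> {lo<..<hi} \<Longrightarrow> f (x, t) = h 0 t"
    and "\<And>i t. t \<in> {lo<..<hi} \<Longrightarrow> (h i has_real_derivative h (Suc i) t) (at t)"
  shows "t \<in> {lo<..<hi} \<Longrightarrow> (pdy ^^ i) f (x, t) = h i t"
proof (induction i arbitrary: t)
  case 0 then show ?case using assms(1) by simp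
next
  case (Suc i)
  have "((\<lambda>t. (pdy ^^ i) f (x, t)) has_real_derivative h (Suc i) t) (at t)"
    by (rule has_field_derivative_transform_within_open[OF assms(2)[OF Suc.prems] open_greaterThanLessThan Suc.prems])
       (simp add: Suc.IH)
  then show ?case by (simp add: DERIV_imp_deriv pdy_apply)
qed

lemma pderiv_iter_zero: "degree (q::real poly) < n \<Longrightarrow> (pderiv ^^ n) q = 0"
proof (induction n arbitrary: q)
  case 0 then show ?case by simp
next
  case (Suc n)
  show ?case
  proof (cases n)
    case 0
    with Suc.prems show ?thesis by (simp add: pderiv_eq_0_iff)
  next
    case (Suc m)
    with Suc.prems have "degree (pderiv q) < n" by (simp add: degree_pderiv)
    from Suc.IH[OF this] show ?thesis by (simp add: funpow_Suc_right del: funpow.simps)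
  qed
qed

lemma orth1D:
  assumes s: "s > 0" and b: "b > -1" and c: "c > -1" and q: "degree q < n"
  shows "((\<lambda>y. poly q y * E (b + real n) (c + real n) s n y) has_integral 0) {0..s}"
proof -
  define EE where "EE = E (b + real n) (c + real n) s"
  define F where "F y = (\<Sum>j<n. (-1) ^ j * poly ((pderiv ^^ j) q) y * EE (n - Suc j) y)" for y
  have cont: "continuous_on {0..s} F"
    unfolding F_def[abs_def] EE_def
  proof (intro continuous_intros E_cont)
    fix j assume "j \<in> {..<n}"
    then show "b + real n - real (n - Suc j) > 0" "c + real n - real (n - Suc j) > 0"
      using b c by (auto simp: of_nat_diff)
  qed
  have der: "(F has_real_derivative poly q y * EE n y) (at y)" if y: "y \<in> {0<..<s}" for y
  proof -
    define T where "T j = (-1) ^ j * poly ((pderiv ^^ j) q) y * EE (n - j) y" for j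
    have "(F has_real_derivative (\<Sum>j<n. (-1) ^ j * (poly ((pderiv ^^ j) q) y * EE (Suc (n - Suc j)) y
         + poly (pderiv ((pderiv ^^ j) q)) y * EE (n - Suc j) y))) (at y)"
      unfolding F_def[abs_def] EE_def mult.assoc
      by (intro DERIV_sum DERIV_cmult DERIV_mult' poly_DERIV E_deriv) (use y in auto)
    also have "(\<Sum>j<n. (-1) ^ j * (poly ((pderiv ^^ j) q) y * EE (Suc (n - Suc j)) y
         + poly (pderiv ((pderiv ^^ j) q)) y * EE (n - Suc j) y)) = (\<Sum>j<n. T j - T (Suc j))"
      by (rule sum.cong[OF refl]) (auto simp: T_def Suc_diff_Suc algebra_simps)
    also have "\<dots> = T 0 - T n" by (rule sum_lessThan_telescope')
    also have "\<dots> = poly q y * EE n y" using pderiv_iter_zero[OF q] by (simp add: T_def)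
    finally show ?thesis .
  qed
  have "((\<lambda>y. poly q y * EE n y) has_integral (F s - F 0)) {0..s}"
    by (rule fundamental_theorem_of_calculus_interior)
       (use s cont der in \<open>auto simp: has_real_derivative_iff_has_vector_derivative[symmetric]\<close>)
  moreover have "F s = 0" "F 0 = 0" by (simp_all add: F_def EE_def E_at0 E_ats)
  ultimately show ?thesis by (simp add: EE_def)
qed



definition R2 :: "real \<Rightarrow> real \<Rightarrow> nat \<Rightarrow> real \<times> real \<Rightarrow> real" where
  "R2 A C n = (\<lambda>(u, v). \<Sum>k\<le>n. L A C n k * v ^ (n - k) * (1 - u - v) ^ k)"

lemma Ptri_R2:
  assumes "(x, y) \<in> tri_int"
  shows "Ptri a b c 0 n (x, y) = R2 (b + real n) (c + real n) n (x, y)"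
proof -
  from assms have x: "0 < x" and y: "0 < y" "y < 1 - x" by (auto simp: tri_int_def)
  define f where "f = (\<lambda>(x::real, y::real). x powr (a + real 0) * y powr (b + real n - real 0) * (1 - x - y) powr (c + real n))"
  have P: "Ptri a b c 0 n (x, y) = (pdy ^^ n) f (x, y) / W a b c (x, y)"
    by (simp add: Ptri_def f_def)
  have "(pdy ^^ n) f (x, y) = x powr a * E (b + real n) (c + real n) (1 - x) n y"
  proof (rule pdy_iter[where lo = 0 and hi = "1 - x" and h = "\<lambda>i t. x powr a * E (b + real n) (c + real n) (1 - x) i t"])
    fix t :: real assume "t \<in> {0<..<1 - x}" show "f (x, t) = x powr a * E (b + real n) (c + real n) (1 - x) 0 t"
      by (simp add: f_def E_def algebra_simps)
  next
    fix i and t :: real assume "t \<in> {0<..<1 - x}"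
    then show "((\<lambda>t. x powr a * E (b + real n) (c + real n) (1 - x) i t) has_real_derivative
       x powr a * E (b + real n) (c + real n) (1 - x) (Suc i) t) (at t)"
      by (intro DERIV_cmult E_deriv) auto
  qed (use y in auto)
  also have "\<dots> = x powr a * (y powr b * (1 - x - y) powr c * R2 (b + real n) (c + real n) n (x, y))"
    using E_factor[of y "1 - x" "b + real n" "c + real n" n] y by (simp add: R2_def)
  finally show ?thesis using P x y by (simp add: W_def)
qed

lemma Jac_R2:
  assumes "0 < y" "y < 1"
  shows "Jac n c b y = R2 (b + real n) (c + real n) n (0, y)"
proof -
  have "(deriv ^^ n) (\<lambda>s. (1 - s) powr (real n + c) * s powr (real n + b)) y
      = E (b + real n) (c + real n) 1 n y"
  proof (rule deriv_iter[where lo = 0 and hi = 1 and h = "E (b + real n) (c + real n) 1"])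
    fix t :: real assume "t \<in> {0<..<1}" show "(1 - t) powr (real n + c) * t powr (real n + b) = E (b + real n) (c + real n) 1 0 t"
      by (simp add: E_def algebra_simps)
  next
    fix i and t :: real assume "t \<in> {0<..<1}"
    then show "(E (b + real n) (c + real n) 1 i has_real_derivative E (b + real n) (c + real n) 1 (Suc i) t) (at t)"
      by (intro E_deriv) auto
  qed (use assms in auto)
  also have "\<dots> = y powr b * (1 - y) powr c * R2 (b + real n) (c + real n) n (0, y)"
    using E_factor[of y 1 "b + real n" "c + real n" n] assms by (simp add: R2_def)
  finally show ?thesis using assms
    by (simp add: Jac_def powr_minus field_simps)
qed

lemma poly_R2: "is_poly2 n (R2 A C n)"
proof -
  have "is_poly2 n (\<lambda>z. \<Sum>k\<le>n. L A C n k * (case z of (x, y) \<Rightarrow> y ^ (n - k) * (1 - x - y) ^ k))"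
  proof (rule poly2_sum)
    fix k assume k: "k \<in> {..n}"
    have "is_poly2 (n - k + k) (\<lambda>(x, y). y ^ (n - k) * (case (x, y) of (x, y) \<Rightarrow> (1 - x - y) ^ k))"
      by (rule poly2_ypow[OF poly2_lin_pow])
    then have "is_poly2 n (\<lambda>(x, y). y ^ (n - k) * (1 - x - y) ^ k)" using k by simp
    then show "is_poly2 n (\<lambda>z. L A C n k * (case z of (x, y) \<Rightarrow> y ^ (n - k) * (1 - x - y) ^ k))"
      by (rule poly2_scale)
  qed auto
  then show ?thesis by (rule poly2_cong) (simp add: R2_def mult.assoc)
qed

lemma poly_R2_swap: "is_poly2 n (\<lambda>(x, y). R2 A C n (y, x))"
proof -
  have "is_poly2 n (\<lambda>z. \<Sum>k\<le>n. L A C n k * (case z of (x, y) \<Rightarrow> x ^ (n - k) * (1 - x - y) ^ k))"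
  proof (rule poly2_sum)
    fix k assume k: "k \<in> {..n}"
    have "is_poly2 (n - k + k) (\<lambda>(x, y). x ^ (n - k) * (case (x, y) of (x, y) \<Rightarrow> (1 - x - y) ^ k))"
      by (rule poly2_xpow[OF poly2_lin_pow])
    then have "is_poly2 n (\<lambda>(x, y). x ^ (n - k) * (1 - x - y) ^ k)" using k by simp
    then show "is_poly2 n (\<lambda>z. L A C n k * (case z of (x, y) \<Rightarrow> x ^ (n - k) * (1 - x - y) ^ k))"
      by (rule poly2_scale)
  qed auto
  then show ?thesis by (rule poly2_cong) (simp add: R2_def mult.assoc algebra_simps)
qed

lemma poly_R2_shear: "is_poly2 n (\<lambda>(x, y). R2 A C n (1 - x - y, y))"
proof -
  have "is_poly2 n (\<lambda>z. \<Sum>k\<le>n. L A C n k * (case z of (x, y) \<Rightarrow> y ^ (n - k) * (x ^ k * 1)))"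
  proof (rule poly2_sum)
    fix k assume k: "k \<in> {..n}"
    have "is_poly2 (n - k + (k + 0)) (\<lambda>(x, y). y ^ (n - k) * (case (x, y) of (x, y) \<Rightarrow> x ^ k * 1))"
      by (rule poly2_ypow[OF poly2_xpow[OF poly2_const]])
    then have "is_poly2 n (\<lambda>(x, y). y ^ (n - k) * (x ^ k * 1))" using k by simp
    then show "is_poly2 n (\<lambda>z. L A C n k * (case z of (x, y) \<Rightarrow> y ^ (n - k) * (x ^ k * 1)))"
      by (rule poly2_scale)
  qed auto
  then show ?thesis by (rule poly2_cong) (simp add: R2_def mult.assoc)
qed



lemma tri_alt: "tri = {z. 0 \<le> fst z} \<inter> {z. 0 \<le> snd z} \<inter> {z. fst z + snd z \<le> 1}"
  by (auto simp: tri_def)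

lemma closed_tri: "closed tri"
  unfolding tri_alt
  by (intro closed_Int closed_Collect_le continuous_intros)

lemma tri_borel[measurable]: "tri \<in> sets borel"
  by (rule borel_closed[OF closed_tri])

lemma tri_borel2[measurable]: "tri \<in> sets (lborel \<Otimes>\<^sub>M lborel)"
  unfolding lborel_prod by simp

lemma compact_tri: "compact tri"
proof -
  have "tri \<subseteq> {0..1} \<times> {0..1}" by (auto simp: tri_def)
  then have "bounded tri" by (rule bounded_subset[OF bounded_Times[OF bounded_closed_interval bounded_closed_interval]])
  then show ?thesis using closed_tri by (simp add: compact_eq_bounded_closed)
qed

lemma W_alt: "W a b c z = fst z powr a * snd z powr b * (1 - fst z - snd z) powr c"
  by (simp add: W_def split: prod.splits)

lemma W_nonneg: "W a b c z \<ge> 0"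
  by (simp add: W_alt)


lemma beta_slice:
  fixes s b c :: real
  assumes s: "s > 0" and b: "b > -1" and c: "c > -1"
  shows "integrable lborel (\<lambda>y. indicator {0..s} y * (y powr b * (s - y) powr c))"
    "(\<integral>y. indicator {0..s} y * (y powr b * (s - y) powr c) \<partial>lborel) = s powr (b + c + 1) * Beta (b + 1) (c + 1)"
proof -
  define f where "f y = indicator {0..s} y * (y powr b * (s - y) powr c)" for y :: real
  define g where "g t = indicator {0..1} t * (t powr b * (1 - t) powr c)" for t :: real
  have B: "set_integrable lborel {0..1} (\<lambda>t. t powr (b + 1 - 1) * (1 - t) powr (c + 1 - 1))"
    by (rule integrable_Beta) (use b c in auto)
  have g_int: "integrable lborel g"
    using B by (simp add: set_integrable_def g_def[abs_def])
  have "(LINT t:{0..1}|lborel. t powr (b + 1 - 1) * (1 - t) powr (c + 1 - 1)) = integral {0..1} (\<lambda>t. t powr (b + 1 - 1) * (1 - t) powr (c + 1 - 1))"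
    by (rule set_borel_integral_eq_integral(2)[OF B])
  also have "\<dots> = Beta (b + 1) (c + 1)"
    by (rule integral_unique[OF has_integral_Beta_real]) (use b c in auto)
  finally have g_val: "integral\<^sup>L lborel g = Beta (b + 1) (c + 1)"
    by (simp add: set_lebesgue_integral_def g_def[abs_def])
  have fg: "f (0 + s * t) = s powr (b + c) * g t" for t
  proof (cases "t \<in> {0..1}")
    case True
    then have "s * t \<in> {0..s}" using s by (auto simp: mult_le_cancel_left1)
    moreover have "s - s * t = s * (1 - t)" by (simp add: algebra_simps)
    ultimately show ?thesis using True s
      by (simp add: f_def g_def powr_mult powr_add)
  next
    case False
    then have "s * t \<notin> {0..s}" using s by (auto simp: mult_le_cancel_left1 zero_le_mult_iff)
    then show ?thesis using False by (simp add: f_def g_def)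
  qed
  have "integrable lborel (\<lambda>t. f (0 + s * t))"
    unfolding fg by (intro integrable_mult_right g_int)
  then show "integrable lborel (\<lambda>y. indicator {0..s} y * (y powr b * (s - y) powr c))"
    using lborel_integrable_real_affine_iff[of s f 0] s by (simp add: f_def[abs_def])
  have "integral\<^sup>L lborel f = \<bar>s\<bar> *\<^sub>R (\<integral>t. f (0 + s * t) \<partial>lborel)"
    by (rule lborel_integral_real_affine) (use s in simp)
  also have "\<dots> = s * (s powr (b + c) * Beta (b + 1) (c + 1))"
    unfolding fg using s g_val by simp
  also have "\<dots> = s powr (b + c + 1) * Beta (b + 1) (c + 1)"
    using s by (simp add: powr_add)
  finally show "(\<integral>y. indicator {0..s} y * (y powr b * (s - y) powr c) \<partial>lborel) = s powr (b + c + 1) * Beta (b + 1) (c + 1)"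
    by (simp add: f_def[abs_def])
qed

lemma tri_W_slice:
  "indicator tri (x, y) * W a b c (x, y) =
     indicator {0<..<1} x * (x powr a * (indicator {0..1 - x} y * (y powr b * ((1 - x) - y) powr c)))"
proof (cases "0 < x \<and> x < 1")
  case True
  then show ?thesis by (auto simp: indicator_def tri_def W_def)
next
  case False
  show ?thesis
  proof (cases "(x, y) \<in> tri")
    case True
    with False have "x = 0 \<or> (x = 1 \<and> y = 0)" by (auto simp: tri_def)
    then show ?thesis using False by (auto simp: W_def)
  next
    case False
    then show ?thesis using \<open>\<not> (0 < x \<and> x < 1)\<close> by (auto simp: indicator_def)
  qed
qed

lemma W_integrable:
  assumes a: "a > -1" and b: "b > -1" and c: "c > -1"
  shows "integrable (lborel \<Otimes>\<^sub>M lborel) (\<lambda>z. indicator tri z * W a b c z)"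
proof (rule lborel_pair.Fubini_integrable)
  show "(\<lambda>z. indicator tri z * W a b c z) \<in> borel_measurable (lborel \<Otimes>\<^sub>M lborel)"
    unfolding W_alt[abs_def] by measurable
next
  have "integrable lborel (\<lambda>y. indicator tri (x, y) * W a b c (x, y))" for x
  proof (cases "0 < x \<and> x < 1")
    case True
    then show ?thesis unfolding tri_W_slice
      by (intro integrable_mult_right beta_slice) (use b c in auto)
  next
    case False
    then show ?thesis unfolding tri_W_slice by simp
  qed
  then show "AE x in lborel. integrable lborel (\<lambda>y. indicator tri (x, y) * W a b c (x, y))"
    by simp
next
  have eq: "(\<integral>y. norm (indicator tri (x, y) * W a b c (x, y)) \<partial>lborel) =
      Beta (b + 1) (c + 1) * (indicator {0..1} x * (x powr (a + 1 - 1) * (1 - x) powr (b + c + 2 - 1)))" for x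
  proof (cases "0 < x \<and> x < 1")
    case True
    have "(\<integral>y. norm (indicator tri (x, y) * W a b c (x, y)) \<partial>lborel) =
       (\<integral>y. indicator {0<..<1} x * x powr a * (indicator {0..1 - x} y * (y powr b * ((1 - x) - y) powr c)) \<partial>lborel)"
      by (intro Bochner_Integration.integral_cong refl) (simp add: abs_of_nonneg W_nonneg tri_W_slice mult.assoc)
    also have "\<dots> = indicator {0<..<1} x * x powr a * ((1 - x) powr (b + c + 1) * Beta (b + 1) (c + 1))"
      using beta_slice(2)[of "1 - x" b c] True b c by simp
    finally show ?thesis using True by (simp add: indicator_def algebra_simps)
  next
    case False
    then have "x \<le> 0 \<or> x \<ge> 1" by auto
    then have "indicator {0..1} x * (x powr (a + 1 - 1) * (1 - x) powr (b + c + 2 - 1)) = 0"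
      by (auto simp: indicator_def)
    then show ?thesis using False by (simp add: tri_W_slice)
  qed
  have "set_integrable lborel {0..1} (\<lambda>t. t powr (a + 1 - 1) * (1 - t) powr (b + c + 2 - 1))"
    by (rule integrable_Beta) (use a b c in auto)
  then have "integrable lborel (\<lambda>x. Beta (b + 1) (c + 1) * (indicator {0..1} x * (x powr (a + 1 - 1) * (1 - x) powr (b + c + 2 - 1))))"
    unfolding set_integrable_def by (intro integrable_mult_right) simp
  then show "integrable lborel (\<lambda>x. \<integral>y. norm (indicator tri (x, y) * W a b c (x, y)) \<partial>lborel)"
    unfolding eq .
qed



lemma R2_alt: "R2 A C n = (\<lambda>z. \<Sum>k\<le>n. L A C n k * snd z ^ (n - k) * (1 - fst z - snd z) ^ k)"
  by (simp add: R2_def fun_eq_iff)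

lemma R2_cont: "continuous_on UNIV (R2 A C n)"
  unfolding R2_alt by (intro continuous_intros)

lemma slice_HK:
  fixes a b c x :: real
  assumes b: "b > -1" and c: "c > -1" and x: "0 < x" "x < 1" and q: "degree q < n"
    and Qq: "\<And>v. Q (x, v) = poly q v"
  shows "((\<lambda>y. R2 (b + real n) (c + real n) n (x, y) * Q (x, y) * W a b c (x, y)) has_integral 0) {0..1 - x}"
proof -
  have "((\<lambda>y. x powr a * (poly q y * E (b + real n) (c + real n) (1 - x) n y)) has_integral x powr a * 0) {0..1 - x}"
    by (intro has_integral_mult_right orth1D) (use b c x q in auto)
  then have h0: "((\<lambda>y. x powr a * (poly q y * E (b + real n) (c + real n) (1 - x) n y)) has_integral 0) {0..1 - x}"
    by simp
  show ?thesis
  proof (rule has_integral_spike_finite[where S = "{0, 1 - x}", OF _ _ h0])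
    fix y assume y: "y \<in> {0..1 - x} - {0, 1 - x}"
    then have y': "0 < y" "y < 1 - x" by auto
    show "R2 (b + real n) (c + real n) n (x, y) * Q (x, y) * W a b c (x, y) =
       x powr a * (poly q y * E (b + real n) (c + real n) (1 - x) n y)"
      using E_factor[OF y', of "b + real n" "c + real n" n]
      by (simp add: R2_def W_def Qq algebra_simps)
  qed simp
qed

lemma core:
  fixes a b c :: real and Q :: "real \<times> real \<Rightarrow> real"
  assumes a: "a > -1" and b: "b > -1" and c: "c > -1"
    and Qc: "continuous_on UNIV Q"
    and Qp: "\<And>u. \<exists>q. degree q < n \<and> (\<forall>v. Q (u, v) = poly q v)"
  shows "integrable (lborel \<Otimes>\<^sub>M lborel) (\<lambda>z. indicator tri z * (R2 (b + real n) (c + real n) n z * Q z * W a b c z))"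
    (is "integrable _ ?G")
    and "integral\<^sup>L (lborel \<Otimes>\<^sub>M lborel) (\<lambda>z. indicator tri z * (R2 (b + real n) (c + real n) n z * Q z * W a b c z)) = 0"
proof -
  let ?R = "R2 (b + real n) (c + real n) n"
  have Qm[measurable]: "Q \<in> borel_measurable (lborel \<Otimes>\<^sub>M lborel)"
    using borel_measurable_continuous_onI[OF Qc] by (simp add: lborel_prod)
  have Rm[measurable]: "?R \<in> borel_measurable (lborel \<Otimes>\<^sub>M lborel)"
    using borel_measurable_continuous_onI[OF R2_cont] by (simp add: lborel_prod)
  have Gm: "?G \<in> borel_measurable (lborel \<Otimes>\<^sub>M lborel)"
    unfolding W_alt[abs_def] by measurable
  have "compact ((\<lambda>z. ?R z * Q z) ` tri)"
    by (intro compact_continuous_image compact_tri continuous_intros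
        continuous_on_subset[OF Qc] continuous_on_subset[OF R2_cont]) auto
  then have "bounded ((\<lambda>z. ?R z * Q z) ` tri)" by (rule compact_imp_bounded)
  then obtain M where M0: "\<forall>w\<in>(\<lambda>z. ?R z * Q z) ` tri. \<bar>w\<bar> \<le> M"
    unfolding bounded_real by blast
  have M: "\<bar>?R z * Q z\<bar> \<le> M" if "z \<in> tri" for z
    using M0 that by blast
  show int: "integrable (lborel \<Otimes>\<^sub>M lborel) ?G"
  proof (rule Bochner_Integration.integrable_bound[OF integrable_mult_right[OF W_integrable[OF a b c], of M] Gm])
    show "AE z in lborel \<Otimes>\<^sub>M lborel. norm (?G z) \<le> norm (M * (indicator tri z * W a b c z))"
    proof (rule AE_I2)
      fix z
      show "norm (?G z) \<le> norm (M * (indicator tri z * W a b c z))"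
      proof (cases "z \<in> tri")
        case True
        have "\<bar>?R z * Q z * W a b c z\<bar> = \<bar>?R z * Q z\<bar> * W a b c z"
          by (simp add: abs_mult abs_of_nonneg W_nonneg)
        also have "\<dots> \<le> M * W a b c z" by (rule mult_right_mono[OF M[OF True] W_nonneg])
        also have "\<dots> \<le> \<bar>M\<bar> * W a b c z" by (rule mult_right_mono[OF abs_ge_self W_nonneg])
        finally show ?thesis using True by (simp add: abs_mult abs_of_nonneg W_nonneg)
      qed simp
    qed
  qed
  have slice0: "(\<integral>y. ?G (x, y) \<partial>lborel) = 0" if xi: "integrable lborel (\<lambda>y. ?G (x, y))" for x
  proof (cases "0 < x \<and> x < 1")
    case True
    obtain q where q: "degree q < n" "\<And>v. Q (x, v) = poly q v" using Qp[of x] by blast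
    have eq: "?G (x, y) = indicator {0..1 - x} y * (?R (x, y) * Q (x, y) * W a b c (x, y))" for y
      using True by (simp add: indicator_def tri_def)
    have si: "set_integrable lborel {0..1 - x} (\<lambda>y. ?R (x, y) * Q (x, y) * W a b c (x, y))"
      using xi unfolding set_integrable_def eq by simp
    have "(\<integral>y. ?G (x, y) \<partial>lborel) = (LINT y:{0..1 - x}|lborel. ?R (x, y) * Q (x, y) * W a b c (x, y))"
      unfolding eq set_lebesgue_integral_def by simp
    also have "\<dots> = integral {0..1 - x} (\<lambda>y. ?R (x, y) * Q (x, y) * W a b c (x, y))"
      by (rule set_borel_integral_eq_integral(2)[OF si])
    also have "\<dots> = 0"
      by (rule integral_unique[OF slice_HK]) (use b c True q in auto)
    finally show ?thesis .
  next
    case False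
    have "?G (x, y) = 0" for y
    proof -
      have "?G (x, y) = (indicator tri (x, y) * W a b c (x, y)) * (?R (x, y) * Q (x, y))"
        by (simp add: algebra_simps)
      also have "\<dots> = 0" using False by (simp add: tri_W_slice)
      finally show ?thesis .
    qed
    then have "(\<lambda>y. ?G (x, y)) = (\<lambda>y. 0)" by (rule ext)
    then show ?thesis by simp
  qed
  have "(\<integral>x. (\<integral>y. ?G (x, y) \<partial>lborel) \<partial>lborel) = 0"
  proof (rule integral_eq_zero_AE)
    show "AE x in lborel. (\<integral>y. ?G (x, y) \<partial>lborel) = 0"
      using lborel_pair.AE_integrable_fst'[OF int] by (rule AE_mp) (use slice0 in blast)
  qed
  then show "integral\<^sup>L (lborel \<Otimes>\<^sub>M lborel) ?G = 0"
    using lborel_pair.integral_fst'[OF int] by simp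
qed



lemma to_HK:
  fixes f :: "real \<times> real \<Rightarrow> real"
  assumes "integrable (lborel \<Otimes>\<^sub>M lborel) (\<lambda>z. indicator S z * f z)"
    and "integral\<^sup>L (lborel \<Otimes>\<^sub>M lborel) (\<lambda>z. indicator S z * f z) = 0"
  shows "(f has_integral 0) S"
proof -
  have si: "set_integrable lborel S f" using assms(1) by (simp add: set_integrable_def lborel_prod)
  have "integral S f = 0"
    using set_borel_integral_eq_integral(2)[OF si] assms(2) by (simp add: set_lebesgue_integral_def lborel_prod)
  with set_borel_integral_eq_integral(1)[OF si] show ?thesis
    using integrable_integral by fastforce
qed

lemma swap_int:
  fixes G :: "real \<times> real \<Rightarrow> real"
  assumes G: "integrable (lborel \<Otimes>\<^sub>M lborel) G"
  shows "integrable (lborel \<Otimes>\<^sub>M lborel) (\<lambda>z. G (snd z, fst z))"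
    "integral\<^sup>L (lborel \<Otimes>\<^sub>M lborel) (\<lambda>z. G (snd z, fst z)) = integral\<^sup>L (lborel \<Otimes>\<^sub>M lborel) G"
proof -
  have e: "(\<lambda>z. G (snd z, fst z)) = (\<lambda>(x, y). G (y, x))" by (simp add: fun_eq_iff)
  show "integrable (lborel \<Otimes>\<^sub>M lborel) (\<lambda>z. G (snd z, fst z))"
    unfolding e by (rule lborel_pair.integrable_product_swap[OF G])
  show "integral\<^sup>L (lborel \<Otimes>\<^sub>M lborel) (\<lambda>z. G (snd z, fst z)) = integral\<^sup>L (lborel \<Otimes>\<^sub>M lborel) G"
    unfolding e by (rule lborel_pair.integral_product_swap[OF borel_measurable_integrable[OF G]])
qed

lemma shear_int:
  fixes F :: "real \<times> real \<Rightarrow> real"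
  assumes F: "integrable (lborel \<Otimes>\<^sub>M lborel) F"
  shows "integrable (lborel \<Otimes>\<^sub>M lborel) (\<lambda>z. F (fst z, 1 - fst z - snd z))"
    "integral\<^sup>L (lborel \<Otimes>\<^sub>M lborel) (\<lambda>z. F (fst z, 1 - fst z - snd z)) = integral\<^sup>L (lborel \<Otimes>\<^sub>M lborel) F"
proof -
  define K where "K = (\<lambda>z. F (fst z, 1 - fst z - snd z))"
  have Fm[measurable]: "F \<in> borel_measurable (lborel \<Otimes>\<^sub>M lborel)" by (rule borel_measurable_integrable[OF F])
  have Km: "K \<in> borel_measurable (lborel \<Otimes>\<^sub>M lborel)" unfolding K_def by measurable
  have sl: "(\<lambda>x. h (1 - y - x)) = (\<lambda>x. h ((1 - y) + (-1) * x))" for h :: "real \<Rightarrow> real" and y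
    by (simp add: fun_eq_iff)
  have ii: "integrable lborel (\<lambda>x. h (1 - y - x)) \<longleftrightarrow> integrable lborel h" for h :: "real \<Rightarrow> real" and y
    unfolding sl by (rule lborel_integrable_real_affine_iff) simp
  have iv: "(\<integral>x. h (1 - y - x) \<partial>lborel) = (\<integral>u. h u \<partial>lborel)" for h :: "real \<Rightarrow> real" and y
    using lborel_integral_real_affine[of "-1" h "1 - y"] unfolding sl by simp
  have Kint: "integrable (lborel \<Otimes>\<^sub>M lborel) K"
  proof (rule lborel_pair.Fubini_integrable[OF Km])
    have "integrable lborel (\<lambda>y. \<integral>u. norm (F (y, u)) \<partial>lborel)"
      using lborel_pair.integrable_fst'[OF integrable_norm[OF F]] by simp
    then show "integrable lborel (\<lambda>y. \<integral>x. norm (K (y, x)) \<partial>lborel)"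
      unfolding K_def using iv[of "\<lambda>u. norm (F (_, u))"] by simp
  next
    show "AE y in lborel. integrable lborel (\<lambda>x. K (y, x))"
      using lborel_pair.AE_integrable_fst'[OF F]
      by (rule AE_mp) (use ii[of "\<lambda>u. F (_, u)"] in \<open>auto simp: K_def\<close>)
  qed
  then show "integrable (lborel \<Otimes>\<^sub>M lborel) (\<lambda>z. F (fst z, 1 - fst z - snd z))" by (simp add: K_def)
  have "integral\<^sup>L (lborel \<Otimes>\<^sub>M lborel) K = (\<integral>y. (\<integral>x. K (y, x) \<partial>lborel) \<partial>lborel)"
    by (rule lborel_pair.integral_fst'[OF Kint, symmetric])
  also have "\<dots> = (\<integral>y. (\<integral>u. F (y, u) \<partial>lborel) \<partial>lborel)"
    unfolding K_def using iv[of "\<lambda>u. F (_, u)"] by simp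
  also have "\<dots> = integral\<^sup>L (lborel \<Otimes>\<^sub>M lborel) F"
    by (rule lborel_pair.integral_fst'[OF F])
  finally show "integral\<^sup>L (lborel \<Otimes>\<^sub>M lborel) (\<lambda>z. F (fst z, 1 - fst z - snd z)) = integral\<^sup>L (lborel \<Otimes>\<^sub>M lborel) F"
    by (simp add: K_def)
qed

lemma poly2_props:
  assumes "is_poly2 m Q"
  shows "continuous_on UNIV Q"
    "continuous_on UNIV (\<lambda>(u, v). Q (v, u))"
    "continuous_on UNIV (\<lambda>(u, v). Q (1 - u - v, v))"
    "\<exists>q. degree q \<le> m \<and> (\<forall>v. Q (u, v) = poly q v)"
    "\<exists>q. degree q \<le> m \<and> (\<forall>v. Q (v, u) = poly q v)"
    "\<exists>q. degree q \<le> m \<and> (\<forall>v. Q (1 - u - v, v) = poly q v)"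
proof -
  obtain c where c: "\<And>x y. Q (x, y) = (\<Sum>i\<le>m. \<Sum>j\<le>m - i. c i j * x ^ i * y ^ j)"
    using assms unfolding is_poly2_def by blast
  have e1: "Q = (\<lambda>z. \<Sum>i\<le>m. \<Sum>j\<le>m - i. c i j * fst z ^ i * snd z ^ j)"
    by (simp add: fun_eq_iff c split: prod.splits)
  have e2: "(\<lambda>(u, v). Q (v, u)) = (\<lambda>z. \<Sum>i\<le>m. \<Sum>j\<le>m - i. c i j * snd z ^ i * fst z ^ j)"
    by (simp add: fun_eq_iff c split: prod.splits)
  have e3: "(\<lambda>(u, v). Q (1 - u - v, v)) = (\<lambda>z. \<Sum>i\<le>m. \<Sum>j\<le>m - i. c i j * (1 - fst z - snd z) ^ i * snd z ^ j)"
    by (simp add: fun_eq_iff c split: prod.splits)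
  show "continuous_on UNIV Q" unfolding e1 by (intro continuous_intros)
  show "continuous_on UNIV (\<lambda>(u, v). Q (v, u))" unfolding e2 by (intro continuous_intros)
  show "continuous_on UNIV (\<lambda>(u, v). Q (1 - u - v, v))" unfolding e3 by (intro continuous_intros)
  show "\<exists>q. degree q \<le> m \<and> (\<forall>v. Q (u, v) = poly q v)"
  proof (intro exI conjI allI)
    show "degree (\<Sum>i\<le>m. \<Sum>j\<le>m - i. monom (c i j * u ^ i) j) \<le> m"
      by (intro degree_sum_le finite_atMost order.trans[OF degree_monom_le]) auto
    show "Q (u, v) = poly (\<Sum>i\<le>m. \<Sum>j\<le>m - i. monom (c i j * u ^ i) j) v" for v
      by (simp add: c poly_sum poly_monom)
  qed
  show "\<exists>q. degree q \<le> m \<and> (\<forall>v. Q (v, u) = poly q v)"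
  proof (intro exI conjI allI)
    show "degree (\<Sum>i\<le>m. \<Sum>j\<le>m - i. monom (c i j * u ^ j) i) \<le> m"
      by (intro degree_sum_le finite_atMost order.trans[OF degree_monom_le]) auto
    show "Q (v, u) = poly (\<Sum>i\<le>m. \<Sum>j\<le>m - i. monom (c i j * u ^ j) i) v" for v
      by (simp add: c poly_sum poly_monom algebra_simps)
  qed
  show "\<exists>q. degree q \<le> m \<and> (\<forall>v. Q (1 - u - v, v) = poly q v)"
  proof (intro exI conjI allI)
    show "degree (\<Sum>i\<le>m. \<Sum>j\<le>m - i. smult (c i j) ([:1 - u, -1:] ^ i * monom 1 j)) \<le> m"
    proof (intro degree_sum_le finite_atMost)
      fix i j assume ij: "i \<in> {..m}" "j \<in> {..m - i}"
      have "degree ([:1 - u, -1:] ^ i) \<le> 1 * i"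
        by (rule order.trans[OF degree_power_le]) (simp add: degree_pCons_le)
      then have "degree ([:1 - u, -1:] ^ i * monom 1 j) \<le> i + j"
        using degree_mult_le[of "[:1 - u, -1:] ^ i" "monom 1 j"] degree_monom_le[of "1::real" j] by simp
      then show "degree (smult (c i j) ([:1 - u, -1:] ^ i * monom 1 j)) \<le> m"
        using ij degree_smult_le[of "c i j" "[:1 - u, -1:] ^ i * monom 1 j"] by auto
    qed
    show "Q (1 - u - v, v) = poly (\<Sum>i\<le>m. \<Sum>j\<le>m - i. smult (c i j) ([:1 - u, -1:] ^ i * monom 1 j)) v" for v
      by (simp add: c poly_sum poly_monom algebra_simps)
  qed
qed



theorem proposition2p1:
  fixes \<alpha> \<beta> \<gamma> :: real and n :: nat
  assumes "\<alpha> > -1" and "\<beta> > -1" and "\<gamma> > -1"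
  shows "(\<exists>p. in_V2 \<alpha> \<beta> \<gamma> n p
            \<and> (\<forall>x y. (x, y) \<in> tri_int \<longrightarrow> Ptri \<alpha> \<beta> \<gamma> 0 n (x, y) = p (x, y))
            \<and> (\<forall>y. 0 < y \<and> y < 1 \<longrightarrow> p (0, y) = Jac n \<gamma> \<beta> y))
       \<and> (\<exists>p. in_V2 \<alpha> \<beta> \<gamma> n p
            \<and> (\<forall>x y. (x, y) \<in> tri_int \<longrightarrow> Ptri \<beta> \<alpha> \<gamma> 0 n (y, x) = p (x, y))
            \<and> (\<forall>x. 0 < x \<and> x < 1 \<longrightarrow> p (x, 0) = Jac n \<gamma> \<alpha> x))
       \<and> (\<exists>p. in_V2 \<alpha> \<beta> \<gamma> n p
            \<and> (\<forall>x y. (x, y) \<in> tri_int \<longrightarrow> Ptri \<gamma> \<beta> \<alpha> 0 n (1 - x - y, y) = p (x, y))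
            \<and> (\<forall>y. 0 < y \<and> y < 1 \<longrightarrow> p (1 - y, y) = Jac n \<alpha> \<beta> y))"
proof (intro conjI)
  note a = assms(1) and b = assms(2) and c = assms(3)
  show "\<exists>p. in_V2 \<alpha> \<beta> \<gamma> n p
            \<and> (\<forall>x y. (x, y) \<in> tri_int \<longrightarrow> Ptri \<alpha> \<beta> \<gamma> 0 n (x, y) = p (x, y))
            \<and> (\<forall>y. 0 < y \<and> y < 1 \<longrightarrow> p (0, y) = Jac n \<gamma> \<beta> y)"
  proof (intro exI conjI allI impI)
    let ?p = "R2 (\<beta> + real n) (\<gamma> + real n) n"
    show "in_V2 \<alpha> \<beta> \<gamma> n ?p"
      unfolding in_V2_def
    proof (intro conjI allI impI poly_R2)
      fix m Q assume mn: "m < n" and Q: "is_poly2 m Q"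
      have Qp: "\<exists>q. degree q < n \<and> (\<forall>v. Q (u, v) = poly q v)" for u
        using poly2_props(4)[OF Q, of u] mn by (meson le_less_trans)
      show "((\<lambda>z. ?p z * Q z * W \<alpha> \<beta> \<gamma> z) has_integral 0) tri"
        by (rule to_HK[OF core(1)[OF a b c poly2_props(1)[OF Q] Qp] core(2)[OF a b c poly2_props(1)[OF Q] Qp]])
    qed
    show "Ptri \<alpha> \<beta> \<gamma> 0 n (x, y) = ?p (x, y)" if "(x, y) \<in> tri_int" for x y
      by (rule Ptri_R2[OF that])
    show "?p (0, y) = Jac n \<gamma> \<beta> y" if "0 < y \<and> y < 1" for y
      using Jac_R2[of y n \<gamma> \<beta>] that by simp
  qed
  show "\<exists>p. in_V2 \<alpha> \<beta> \<gamma> n p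
            \<and> (\<forall>x y. (x, y) \<in> tri_int \<longrightarrow> Ptri \<beta> \<alpha> \<gamma> 0 n (y, x) = p (x, y))
            \<and> (\<forall>x. 0 < x \<and> x < 1 \<longrightarrow> p (x, 0) = Jac n \<gamma> \<alpha> x)"
  proof (intro exI conjI allI impI)
    let ?p = "\<lambda>(x, y). R2 (\<alpha> + real n) (\<gamma> + real n) n (y, x)"
    show "in_V2 \<alpha> \<beta> \<gamma> n ?p"
      unfolding in_V2_def
    proof (intro conjI allI impI poly_R2_swap)
      fix m Q assume mn: "m < n" and Q: "is_poly2 m Q"
      let ?Q = "\<lambda>(u, v). Q (v, u)"
      have Qp: "\<exists>q. degree q < n \<and> (\<forall>v. ?Q (u, v) = poly q v)" for u
        using poly2_props(5)[OF Q, of u] mn by (auto intro: le_less_trans)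
      let ?G = "\<lambda>z. indicator tri z * (R2 (\<alpha> + real n) (\<gamma> + real n) n z * ?Q z * W \<beta> \<alpha> \<gamma> z)"
      have G1: "integrable (lborel \<Otimes>\<^sub>M lborel) ?G" and G2: "integral\<^sup>L (lborel \<Otimes>\<^sub>M lborel) ?G = 0"
        using core[OF b a c poly2_props(2)[OF Q] Qp] by auto
      have e: "(\<lambda>z. ?G (snd z, fst z)) = (\<lambda>z. indicator tri z * (?p z * Q z * W \<alpha> \<beta> \<gamma> z))"
        by (auto simp: fun_eq_iff indicator_def tri_def W_def algebra_simps)
      show "((\<lambda>z. ?p z * Q z * W \<alpha> \<beta> \<gamma> z) has_integral 0) tri"
        using to_HK[of tri "\<lambda>z. ?p z * Q z * W \<alpha> \<beta> \<gamma> z"] swap_int[OF G1] G2 unfolding e by simp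
    qed
    show "Ptri \<beta> \<alpha> \<gamma> 0 n (y, x) = ?p (x, y)" if "(x, y) \<in> tri_int" for x y
    proof -
      have "(y, x) \<in> tri_int" using that by (auto simp: tri_int_def)
      then show ?thesis by (simp add: Ptri_R2)
    qed
    show "?p (x, 0) = Jac n \<gamma> \<alpha> x" if "0 < x \<and> x < 1" for x
      using Jac_R2[of x n \<gamma> \<alpha>] that by simp
  qed
  show "\<exists>p. in_V2 \<alpha> \<beta> \<gamma> n p
            \<and> (\<forall>x y. (x, y) \<in> tri_int \<longrightarrow> Ptri \<gamma> \<beta> \<alpha> 0 n (1 - x - y, y) = p (x, y))
            \<and> (\<forall>y. 0 < y \<and> y < 1 \<longrightarrow> p (1 - y, y) = Jac n \<alpha> \<beta> y)"
  proof (intro exI conjI allI impI)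
    let ?p = "\<lambda>(x, y). R2 (\<beta> + real n) (\<alpha> + real n) n (1 - x - y, y)"
    show "in_V2 \<alpha> \<beta> \<gamma> n ?p"
      unfolding in_V2_def
    proof (intro conjI allI impI poly_R2_shear)
      fix m Q assume mn: "m < n" and Q: "is_poly2 m Q"
      let ?Q = "\<lambda>(u, v). Q (1 - u - v, v)"
      have Qp: "\<exists>q. degree q < n \<and> (\<forall>v. ?Q (u, v) = poly q v)" for u
        using poly2_props(6)[OF Q, of u] mn by (auto intro: le_less_trans)
      let ?G = "\<lambda>z. indicator tri z * (R2 (\<beta> + real n) (\<alpha> + real n) n z * ?Q z * W \<gamma> \<beta> \<alpha> z)"
      have G1: "integrable (lborel \<Otimes>\<^sub>M lborel) ?G" and G2: "integral\<^sup>L (lborel \<Otimes>\<^sub>M lborel) ?G = 0"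
        using core[OF c b a poly2_props(3)[OF Q] Qp] by auto
      define F where "F = (\<lambda>z. ?G (snd z, fst z))"
      have F1: "integrable (lborel \<Otimes>\<^sub>M lborel) F" and F2: "integral\<^sup>L (lborel \<Otimes>\<^sub>M lborel) F = 0"
        using swap_int[OF G1] G2 by (simp_all add: F_def)
      define K where "K = (\<lambda>z. F (fst z, 1 - fst z - snd z))"
      have K1: "integrable (lborel \<Otimes>\<^sub>M lborel) K" and K2: "integral\<^sup>L (lborel \<Otimes>\<^sub>M lborel) K = 0"
        using shear_int[OF F1] F2 by (simp_all add: K_def)
      have H1: "integrable (lborel \<Otimes>\<^sub>M lborel) (\<lambda>z. K (snd z, fst z))"
        and H2: "integral\<^sup>L (lborel \<Otimes>\<^sub>M lborel) (\<lambda>z. K (snd z, fst z)) = 0"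
        using swap_int[OF K1] K2 by simp_all
      have e: "(\<lambda>z. K (snd z, fst z)) = (\<lambda>z. indicator tri z * (?p z * Q z * W \<alpha> \<beta> \<gamma> z))"
      proof (rule ext)
        fix z :: "real \<times> real"
        obtain x y where z: "z = (x, y)" by (cases z)
        have e1: "1 - y - x = 1 - x - y" "1 - (1 - x - y) - y = x" by simp_all
        show "K (snd z, fst z) = indicator tri z * (?p z * Q z * W \<alpha> \<beta> \<gamma> z)"
          unfolding z K_def F_def by (auto simp: e1 indicator_def tri_def W_def algebra_simps)
      qed
      show "((\<lambda>z. ?p z * Q z * W \<alpha> \<beta> \<gamma> z) has_integral 0) tri"
        using to_HK[of tri "\<lambda>z. ?p z * Q z * W \<alpha> \<beta> \<gamma> z"] H1 H2 unfolding e by simp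
    qed
    show "Ptri \<gamma> \<beta> \<alpha> 0 n (1 - x - y, y) = ?p (x, y)" if "(x, y) \<in> tri_int" for x y
    proof -
      have "(1 - x - y, y) \<in> tri_int" using that by (auto simp: tri_int_def)
      then show ?thesis by (simp add: Ptri_R2)
    qed
    show "?p (1 - y, y) = Jac n \<alpha> \<beta> y" if "0 < y \<and> y < 1" for y
      using Jac_R2[of y n \<alpha> \<beta>] that by simp
  qed
qed

end
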